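(* Fix constants $\mu>0$, $\beta_0>0$, $\gamma_0>0$ and effectiveness parameters $\beta_e\ge 0$, $\gamma_e\ge 0$. Let $F_{\beta_0}:[0,1]\to(0,\infty)$, $u\mapsto F_{\beta_0}(u)$, be a transmission-rate production function and $F_{\gamma_0}$, $u\mapsto F_{\gamma_0}(1-u)$, a recovery-rate production function, where $F_{\beta_0}$ is a strictly decreasing function of $u$ and $F_{\gamma_0}(1-u)$ is a strictly increasing function of $1-u$, both positive on $[0,1]$ and twice differentiable on $(0,1)$. Suppose that each of $F_{\beta_0}$ and $F_{\gamma_0}$ has either increasing or constant returns to scale (in the sense defined in the context; the two may be of different types). Define $$\mathcal{R}_0^c(u)=\frac{F_{\beta_0}(u)}{F_{\gamma_0}(1-u)+\mu},\qquad I^*(u)=\mu\left(\frac{1}{F_{\gamma_0}(1-u)+\mu}-\frac{1}{F_{\beta_0}(u)}\right),$$ and suppose $\mathcal{R}_0^c(u)>1$ for all $u\in[0,1]$ (the region of the asymptotically stable endemic state). Then the minimum of $I^*$ over $[0,1]$ is not attained at any point of $(0,1)$; i.e., the optimal fraction of resources $u^*_{\rm long}$ minimizing $I^*$ takes only the extreme values $0$ or $1$. Moreover, for given $\beta_e,\gamma_e$, the optimal fraction $u^*_{\rm long}$ is the same for all these combinations of return types (increasing/increasing, constant/constant, increasing/constant, constant/increasing), provided the production functions of different return types agree at the endpoints as described in the context.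
   Context: This is a Susceptible–Infected–Recovered model $S'=\mu-F_{\beta_0}(u)SI-\mu S$, $I'=F_{\beta_0}(u)SI-F_{\gamma_0}(1-u)I-\mu I$, $R'=F_{\gamma_0}(1-u)I-\mu R$, where a fraction $u\in[0,1]$ of a fixed budget is invested in transmission reduction and $1-u$ in recovery improvement; the baseline transmission and recovery rates are $\beta_0$ and $\gamma_0$, and $\beta_e,\gamma_e$ measure the effectiveness of the two interventions. When $\mathcal{R}_0^c>1$ the endemic equilibrium has infected fraction $I^*=\frac{\mu}{F_{\beta_0}}(\mathcal{R}_0^c-1)$, which equals the formula in the claim. Returns to scale: $F_{\beta_0}$ has constant returns if it is linear (decreasing) in $u$, and increasing returns if it is concave and decreasing in $u$ ($F_{\beta_0}'<0$, $F_{\beta_0}''\le 0$); $F_{\gamma_0}(1-u)$ has constant returns if it is linear (increasing) in $1-u$, and increasing returns if it is convex and increasing in $1-u$ (equivalently, as a function of $u$: $\frac{d}{du}F_{\gamma_0}(1-u)<0$, $\frac{d^2}{du^2}F_{\gamma_0}(1-u)\ge 0$). For fixed $\beta_e,\gamma_e$, the production functions of the different return types for $F_{\beta_0}$ are assumed to take identical values at $u=0$ and at $u=1$, and likewise for $F_{\gamma_0}$ (e.g. $F_{\beta_0}(u)=\beta_0(1-\frac{\beta_e u^2}{1+\beta_e})$ or $\beta_0(1-\frac{\beta_e u}{1+\beta_e})$, and $F_{\gamma_0}(1-u)=\gamma_0(1+\gamma_e)^{1-u}$ or $\gamma_0(1+\gamma_e(1-u))$). *)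

theory Defs
  imports "HOL-Analysis.Analysis"
begin

text \<open>F stands for the transmission production function u \<mapsto> F_beta0(u);
 Fg stands for the recovery production function F_gamma0, applied as Fg (1 - u).\<close>

definition twice_diff_on :: "(real \<Rightarrow> real) \<Rightarrow> real set \<Rightarrow> bool" where
  "twice_diff_on f S \<longleftrightarrow> (\<forall>x\<in>S. f differentiable (at x) \<and> deriv f differentiable (at x))"

definition trans_constant_returns :: "(real \<Rightarrow> real) \<Rightarrow> bool" where
  "trans_constant_returns F \<longleftrightarrow> (\<exists>a b. b < 0 \<and> (\<forall>u\<in>{0..1}. F u = a + b * u))"

definition trans_increasing_returns :: "(real \<Rightarrow> real) \<Rightarrow> bool" where
  "trans_increasing_returns F \<longleftrightarrow>
     (\<forall>u\<in>{0<..<1}. deriv F u < 0 \<and> deriv (deriv F) u \<le> 0)"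

definition recov_constant_returns :: "(real \<Rightarrow> real) \<Rightarrow> bool" where
  "recov_constant_returns Fg \<longleftrightarrow> (\<exists>a b. b > 0 \<and> (\<forall>u\<in>{0..1}. Fg (1 - u) = a + b * (1 - u)))"

definition recov_increasing_returns :: "(real \<Rightarrow> real) \<Rightarrow> bool" where
  "recov_increasing_returns Fg \<longleftrightarrow>
     (\<forall>u\<in>{0<..<1}. deriv (\<lambda>x. Fg (1 - x)) u < 0 \<and> deriv (deriv (\<lambda>x. Fg (1 - x))) u \<ge> 0)"

definition admissible_transmission :: "(real \<Rightarrow> real) \<Rightarrow> bool" where
  "admissible_transmission F \<longleftrightarrow>
     (\<forall>u\<in>{0..1}. F u > 0) \<and>
     (\<forall>u\<in>{0..1}. \<forall>v\<in>{0..1}. u < v \<longrightarrow> F v < F u) \<and>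
     continuous_on {0..1} F \<and> twice_diff_on F {0<..<1} \<and>
     (trans_increasing_returns F \<or> trans_constant_returns F)"

definition admissible_recovery :: "(real \<Rightarrow> real) \<Rightarrow> bool" where
  "admissible_recovery Fg \<longleftrightarrow>
     (\<forall>u\<in>{0..1}. Fg (1 - u) > 0) \<and>
     (\<forall>u\<in>{0..1}. \<forall>v\<in>{0..1}. (1 - u) < (1 - v) \<longrightarrow> Fg (1 - u) < Fg (1 - v)) \<and>
     continuous_on {0..1} (\<lambda>u. Fg (1 - u)) \<and> twice_diff_on (\<lambda>u. Fg (1 - u)) {0<..<1} \<and>
     (recov_increasing_returns Fg \<or> recov_constant_returns Fg)"

definition R0c :: "real \<Rightarrow> (real \<Rightarrow> real) \<Rightarrow> (real \<Rightarrow> real) \<Rightarrow> real \<Rightarrow> real" where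
  "R0c \<mu> F Fg u = F u / (Fg (1 - u) + \<mu>)"

definition Istar :: "real \<Rightarrow> (real \<Rightarrow> real) \<Rightarrow> (real \<Rightarrow> real) \<Rightarrow> real \<Rightarrow> real" where
  "Istar \<mu> F Fg u = \<mu> * (1 / (Fg (1 - u) + \<mu>) - 1 / F u)"

definition opt_long :: "real \<Rightarrow> (real \<Rightarrow> real) \<Rightarrow> (real \<Rightarrow> real) \<Rightarrow> real set" where
  "opt_long \<mu> F Fg = {u\<in>{0..1}. \<forall>v\<in>{0..1}. Istar \<mu> F Fg u \<le> Istar \<mu> F Fg v}"

end

theory Submission
  imports Defs
begin

lemma descent:
  fixes f f' :: "real \<Rightarrow> real"
  assumes u: "u \<in> {0<..<1}"
    and df: "\<And>x. x \<in> {0<..<1} \<Longrightarrow> (f has_real_derivative f' x) (at x)"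
    and d2: "(f' has_real_derivative L) (at u)" and L: "L < 0"
  shows "\<exists>v\<in>{0..1}. f v < f u"
proof (rule ccontr)
  assume "\<not> ?thesis"
  hence mn: "\<forall>v\<in>{0..1}. f u \<le> f v" by auto
  have "f' u = 0"
  proof (rule DERIV_local_min[OF df[OF u], of "min u (1-u)"])
    show "0 < min u (1 - u)" using u by auto
    show "\<forall>y. \<bar>u - y\<bar> < min u (1 - u) \<longrightarrow> f u \<le> f y"
    proof (intro allI impI)
      fix y assume "\<bar>u - y\<bar> < min u (1 - u)"
      hence "y \<in> {0..1}" by (auto simp: abs_if split: if_splits)
      thus "f u \<le> f y" using mn by auto
    qed
  qed
  from DERIV_neg_dec_right[OF d2 L] obtain d where d: "d > 0"
    "\<forall>h>0. h < d \<longrightarrow> f' u > f' (u + h)" by auto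
  define h where "h = min (d/2) ((1-u)/2)"
  have h: "h > 0" "h < d" "u + h < 1" using d u by (auto simp: h_def min_def field_simps)
  obtain z where z: "u < z" "z < u + h" "f (u+h) - f u = h * f' z"
    using MVT2[of u "u+h" f f'] h u df by auto
  have "f' z < 0" using d(2)[rule_format, of "z - u"] z h \<open>f' u = 0\<close> by auto
  hence "h * f' z < 0" using h(1) by (simp add: mult_pos_neg)
  hence "f (u+h) < f u" using z(3) by linarith
  moreover have "u + h \<in> {0..1}" using u h by auto
  ultimately show False using mn by force
qed

lemma trans_props:
  assumes "admissible_transmission F" "u \<in> {0<..<1}"
  shows "(F has_real_derivative deriv F u) (at u)"
    "(deriv F has_real_derivative deriv (deriv F) u) (at u)"
    "deriv F u < 0" "deriv (deriv F) u \<le> 0"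
proof -
  have td: "twice_diff_on F {0<..<1}" using assms(1) unfolding admissible_transmission_def by auto
  show "(F has_real_derivative deriv F u) (at u)"
    "(deriv F has_real_derivative deriv (deriv F) u) (at u)"
    using td assms(2) unfolding twice_diff_on_def by (auto simp: DERIV_deriv_iff_real_differentiable)
  have "trans_increasing_returns F \<or> trans_constant_returns F"
    using assms(1) unfolding admissible_transmission_def by auto
  hence "deriv F u < 0 \<and> deriv (deriv F) u \<le> 0"
  proof
    assume "trans_increasing_returns F" thus ?thesis using assms(2) unfolding trans_increasing_returns_def by auto
  next
    assume "trans_constant_returns F"
    then obtain a b where ab: "b < 0" "\<forall>u\<in>{0..1}. F u = a + b * u" unfolding trans_constant_returns_def by auto
    have ev: "\<forall>\<^sub>F x in nhds y. F x = a + b * x" if "y \<in> {0<..<1}" for y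
    proof -
      have "\<forall>\<^sub>F x in nhds y. x \<in> {0<..<1::real}" using eventually_nhds_in_open[of "{0<..<1::real}" y] that by auto
      thus ?thesis by (rule eventually_mono) (auto simp: ab)
    qed
    have dF: "deriv F y = b" if "y \<in> {0<..<1}" for y
    proof -
      have "deriv F y = deriv (\<lambda>x. a + b * x) y" by (rule deriv_cong_ev[OF ev[OF that]]) auto
      also have "\<dots> = b" by (rule DERIV_imp_deriv) (auto intro!: derivative_eq_intros)
      finally show ?thesis .
    qed
    have "\<forall>\<^sub>F x in nhds u. x \<in> {0<..<1::real}" using eventually_nhds_in_open[of "{0<..<1::real}" u] assms(2) by auto
    hence "\<forall>\<^sub>F x in nhds u. deriv F x = b" by (rule eventually_mono) (auto simp: dF)
    hence "deriv (deriv F) u = deriv (\<lambda>_. b) u" by (rule deriv_cong_ev) auto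
    also have "\<dots> = 0" by simp
    finally show ?thesis using dF[OF assms(2)] ab by simp
  qed
  thus "deriv F u < 0" "deriv (deriv F) u \<le> 0" by auto
qed

lemma recov_props:
  assumes "admissible_recovery Fg" "u \<in> {0<..<1}"
  defines "G \<equiv> (\<lambda>x. Fg (1 - x))"
  shows "(G has_real_derivative deriv G u) (at u)"
    "(deriv G has_real_derivative deriv (deriv G) u) (at u)"
    "deriv G u < 0" "deriv (deriv G) u \<ge> 0"
proof -
  have td: "twice_diff_on G {0<..<1}" using assms(1) unfolding admissible_recovery_def G_def by auto
  show "(G has_real_derivative deriv G u) (at u)"
    "(deriv G has_real_derivative deriv (deriv G) u) (at u)"
    using td assms(2) unfolding twice_diff_on_def by (auto simp: DERIV_deriv_iff_real_differentiable)
  have "recov_increasing_returns Fg \<or> recov_constant_returns Fg"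
    using assms(1) unfolding admissible_recovery_def by auto
  hence "deriv G u < 0 \<and> deriv (deriv G) u \<ge> 0"
  proof
    assume "recov_increasing_returns Fg" thus ?thesis using assms(2) unfolding recov_increasing_returns_def G_def by auto
  next
    assume "recov_constant_returns Fg"
    then obtain a b where ab: "b > 0" "\<forall>u\<in>{0..1}. G u = a + b * (1 - u)" unfolding recov_constant_returns_def G_def by auto
    have ev: "\<forall>\<^sub>F x in nhds y. G x = a + b * (1 - x)" if "y \<in> {0<..<1}" for y
    proof -
      have "\<forall>\<^sub>F x in nhds y. x \<in> {0<..<1::real}" using eventually_nhds_in_open[of "{0<..<1::real}" y] that by auto
      thus ?thesis by (rule eventually_mono) (auto simp: ab)
    qed
    have dF: "deriv G y = - b" if "y \<in> {0<..<1}" for y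
    proof -
      have "deriv G y = deriv (\<lambda>x. a + b * (1 - x)) y" by (rule deriv_cong_ev[OF ev[OF that]]) auto
      also have "\<dots> = - b" by (rule DERIV_imp_deriv) (auto intro!: derivative_eq_intros)
      finally show ?thesis .
    qed
    have "\<forall>\<^sub>F x in nhds u. x \<in> {0<..<1::real}" using eventually_nhds_in_open[of "{0<..<1::real}" u] assms(2) by auto
    hence "\<forall>\<^sub>F x in nhds u. deriv G x = - b" by (rule eventually_mono) (auto simp: dF)
    hence "deriv (deriv G) u = deriv (\<lambda>_. - b) u" by (rule deriv_cong_ev) auto
    also have "\<dots> = 0" by simp
    finally show ?thesis using dF[OF assms(2)] ab by simp
  qed
  thus "deriv G u < 0" "deriv (deriv G) u \<ge> 0" by auto
qed

lemma core:
  fixes F G F1 G1 :: "real \<Rightarrow> real" and \<mu> F2 G2 :: real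
  assumes mu: "\<mu> > 0" and u: "u \<in> {0<..<1}"
    and dF: "\<And>x. x \<in> {0<..<1} \<Longrightarrow> (F has_real_derivative F1 x) (at x)"
    and dG: "\<And>x. x \<in> {0<..<1} \<Longrightarrow> (G has_real_derivative G1 x) (at x)"
    and dF1: "(F1 has_real_derivative F2) (at u)"
    and dG1: "(G1 has_real_derivative G2) (at u)"
    and sF1: "F1 u < 0" and sG1: "G1 u < 0" and sF2: "F2 \<le> 0" and sG2: "G2 \<ge> 0"
    and pos: "\<And>x. x \<in> {0..1} \<Longrightarrow> G x > 0"
    and R: "\<And>x. x \<in> {0..1} \<Longrightarrow> F x > G x + \<mu>"
  shows "\<exists>v\<in>{0..1}. \<mu> * (1 / (G v + \<mu>) - 1 / F v) < \<mu> * (1 / (G u + \<mu>) - 1 / F u)"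
proof -
  define f' where "f' = (\<lambda>x. \<mu> * (- G1 x / (G x + \<mu>)^2 + F1 x / (F x)^2))"
  have Fp: "F x > 0" "G x + \<mu> > 0" if "x \<in> {0..1}" for x using pos[OF that] R[OF that] mu by auto
  have df: "((\<lambda>x. \<mu> * (1 / (G x + \<mu>) - 1 / F x)) has_real_derivative f' x) (at x)"
    if x: "x \<in> {0<..<1}" for x
  proof -
    have "x \<in> {0..1}" using x by auto
    note p = Fp[OF this]
    have a: "((\<lambda>x. 1 / (G x + \<mu>)) has_real_derivative - G1 x / (G x + \<mu>)^2) (at x)"
      using DERIV_inverse_fun[of "\<lambda>x. G x + \<mu>" "G1 x" x] DERIV_add[OF dG[OF x] DERIV_const[of \<mu>]] p
      by (simp add: divide_inverse power2_eq_square)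
    have b: "((\<lambda>x. 1 / F x) has_real_derivative - F1 x / (F x)^2) (at x)"
      using DERIV_inverse_fun[of "F" "F1 x" x] dF[OF x] p
      by (simp add: divide_inverse power2_eq_square)
    show ?thesis unfolding f'_def using DERIV_cmult[OF DERIV_diff[OF a b], of \<mu>] by simp
  qed
  have uu: "u \<in> {0..1}" using u by auto
  note p = Fp[OF uu]
  have FD: "F differentiable at u" using dF[OF u] real_differentiable_def by blast
  have GD: "G differentiable at u" using dG[OF u] real_differentiable_def by blast
  define P where "P = F u"
  define Q where "Q = G u + \<mu>"
  have PQ: "P > Q" "Q > 0" using p R[OF uu] unfolding P_def Q_def by auto
  define L where "L = \<mu> * ((- G2 * (Q*Q) - (- G1 u) * (G1 u * Q + Q * G1 u)) / ((Q*Q)*(Q*Q))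
       + (F2 * (P*P) - F1 u * (F1 u * P + P * F1 u)) / ((P*P)*(P*P)))"
  have dQ: "((\<lambda>x. G x + \<mu>) has_real_derivative G1 u) (at u)"
    using DERIV_add[OF dG[OF u] DERIV_const[of \<mu>]] by simp
  have t1: "((\<lambda>x. - G1 x / ((G x + \<mu>) * (G x + \<mu>))) has_real_derivative
      (- G2 * (Q*Q) - (- G1 u) * (G1 u * Q + Q * G1 u)) / ((Q*Q)*(Q*Q))) (at u)"
    using DERIV_divide[OF DERIV_minus[OF dG1] DERIV_mult[OF dQ dQ]] PQ unfolding Q_def by simp
  have t2: "((\<lambda>x. F1 x / (F x * F x)) has_real_derivative
      (F2 * (P*P) - F1 u * (F1 u * P + P * F1 u)) / ((P*P)*(P*P))) (at u)"
    using DERIV_divide[OF dF1 DERIV_mult[OF dF[OF u] dF[OF u]]] PQ unfolding P_def by simp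
  have d2: "(f' has_real_derivative L) (at u)"
    unfolding f'_def L_def using DERIV_cmult[OF DERIV_add[OF t1 t2], of \<mu>]
    by (simp add: power2_eq_square)
  show ?thesis
  proof (rule ccontr)
    assume "\<not> ?thesis"
    hence mn: "\<forall>v\<in>{0..1}. \<mu> * (1 / (G u + \<mu>) - 1 / F u) \<le> \<mu> * (1 / (G v + \<mu>) - 1 / F v)" by (auto simp: not_less)
    have fz: "f' u = 0"
    proof (rule DERIV_local_min[OF df[OF u], of "min u (1-u)"])
      show "0 < min u (1 - u)" using u by auto
      show "\<forall>y. \<bar>u - y\<bar> < min u (1 - u) \<longrightarrow> \<mu> * (1 / (G u + \<mu>) - 1 / F u) \<le> \<mu> * (1 / (G y + \<mu>) - 1 / F y)"
      proof (intro allI impI)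
        fix y assume "\<bar>u - y\<bar> < min u (1 - u)"
        hence "y \<in> {0..1}" by (auto simp: abs_if split: if_splits)
        thus "\<mu> * (1 / (G u + \<mu>) - 1 / F u) \<le> \<mu> * (1 / (G y + \<mu>) - 1 / F y)" using mn by auto
      qed
    qed
    define a where "a = - G1 u"
    define b where "b = - F1 u"
    have ab: "a > 0" "b > 0" using sG1 sF1 unfolding a_def b_def by auto
    have "- G1 u / (Q*Q) + F1 u / (P*P) = 0" using fz mu unfolding f'_def P_def Q_def by (simp add: power2_eq_square)
    hence e: "a * (P*P) = b * (Q*Q)" using PQ unfolding a_def b_def by (simp add: field_simps)
    have "b*b*(Q*Q*Q*Q) = a*a*(P*P*P*P)" using e by (metis mult.assoc mult.commute)
    moreover have "a*a*(P*P*P*Q) < a*a*(P*P*P*P)" using ab PQ by (simp add: mult_strict_left_mono)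
    ultimately have "(a*a*(P*P*P)) * Q < (b*b*(Q*Q*Q)) * Q" by (simp add: algebra_simps)
    hence k: "a*a*(P*P*P) < b*b*(Q*Q*Q)" using PQ by (simp add: mult_less_cancel_right)
    have T1: "(- G2 * (Q*Q) - (- G1 u) * (G1 u * Q + Q * G1 u)) / ((Q*Q)*(Q*Q)) \<le> 2*a*a/(Q*Q*Q)"
    proof -
      have "(- G2 * (Q*Q) - (- G1 u) * (G1 u * Q + Q * G1 u)) = - G2 * (Q*Q) + 2*a*a*Q" unfolding a_def by algebra
      also have "\<dots> \<le> 2*a*a*Q" using sG2 PQ by (simp add: mult_nonneg_nonneg)
      finally have "(- G2 * (Q*Q) - (- G1 u) * (G1 u * Q + Q * G1 u)) / ((Q*Q)*(Q*Q)) \<le> (2*a*a*Q) / ((Q*Q)*(Q*Q))"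
        by (rule divide_right_mono) (use PQ in auto)
      also have "\<dots> = 2*a*a/(Q*Q*Q)" using PQ by (simp add: field_simps)
      finally show ?thesis .
    qed
    have T2: "(F2 * (P*P) - F1 u * (F1 u * P + P * F1 u)) / ((P*P)*(P*P)) \<le> - 2*b*b/(P*P*P)"
    proof -
      have "(F2 * (P*P) - F1 u * (F1 u * P + P * F1 u)) = F2 * (P*P) - 2*b*b*P" unfolding b_def by algebra
      also have "\<dots> \<le> - 2*b*b*P" using sF2 PQ by (simp add: mult_nonpos_nonneg)
      finally have "(F2 * (P*P) - F1 u * (F1 u * P + P * F1 u)) / ((P*P)*(P*P)) \<le> (- 2*b*b*P) / ((P*P)*(P*P))"
        by (rule divide_right_mono) (use PQ in auto)
      also have "\<dots> = - 2*b*b/(P*P*P)" using PQ by (simp add: field_simps)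
      finally show ?thesis .
    qed
    have "2*a*a/(Q*Q*Q) < 2*b*b/(P*P*P)" using k PQ by (simp add: field_simps)
    hence "(- G2 * (Q*Q) - (- G1 u) * (G1 u * Q + Q * G1 u)) / ((Q*Q)*(Q*Q))
       + (F2 * (P*P) - F1 u * (F1 u * P + P * F1 u)) / ((P*P)*(P*P)) < 0" using T1 T2 by linarith
    hence "L < 0" unfolding L_def using mu by (simp add: mult_pos_neg)
    from descent[OF u df d2 this] mn show False by force
  qed
qed

lemma no_interior:
  assumes mu: "\<mu> > 0" and aF: "admissible_transmission F" and aG: "admissible_recovery Fg"
    and R: "\<forall>u\<in>{0..1}. R0c \<mu> F Fg u > 1" and u: "u \<in> {0<..<1}"
  shows "\<exists>v\<in>{0..1}. Istar \<mu> F Fg v < Istar \<mu> F Fg u"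
proof -
  define G where "G = (\<lambda>x. Fg (1 - x))"
  have pos: "G x > 0" if "x \<in> {0..1}" for x using aG that unfolding admissible_recovery_def G_def by auto
  have RR: "F x > G x + \<mu>" if "x \<in> {0..1}" for x
  proof -
    have "F x / (G x + \<mu>) > 1" using R that unfolding R0c_def G_def by auto
    thus ?thesis using pos[OF that] mu by (simp add: field_simps)
  qed
  have "\<exists>v\<in>{0..1}. \<mu> * (1 / (G v + \<mu>) - 1 / F v) < \<mu> * (1 / (G u + \<mu>) - 1 / F u)"
  proof (rule core[OF mu u])
    show "\<And>x. x \<in> {0<..<1} \<Longrightarrow> (F has_real_derivative deriv F x) (at x)" using trans_props[OF aF] by blast
    show "\<And>x. x \<in> {0<..<1} \<Longrightarrow> (G has_real_derivative deriv G x) (at x)" using recov_props[OF aG] unfolding G_def by blast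
    show "(deriv F has_real_derivative deriv (deriv F) u) (at u)" "deriv F u < 0" "deriv (deriv F) u \<le> 0"
      using trans_props[OF aF u] by auto
    show "(deriv G has_real_derivative deriv (deriv G) u) (at u)" "deriv G u < 0" "deriv (deriv G) u \<ge> 0"
      using recov_props[OF aG u] unfolding G_def by auto
  qed (use pos RR in auto)
  thus ?thesis unfolding Istar_def G_def .
qed

lemma Istar_cont:
  assumes mu: "\<mu> > 0" and aF: "admissible_transmission F" and aG: "admissible_recovery Fg"
  shows "continuous_on {0..1} (Istar \<mu> F Fg)"
proof -
  have cF: "continuous_on {0..1} F" and pF: "\<forall>u\<in>{0..1}. F u > 0" using aF unfolding admissible_transmission_def by auto
  have cG: "continuous_on {0..1} (\<lambda>u. Fg (1 - u))" and pG: "\<forall>u\<in>{0..1}. Fg (1 - u) > 0" using aG unfolding admissible_recovery_def by auto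
  have "continuous_on {0..1} (\<lambda>u. \<mu> * (1 / (Fg (1 - u) + \<mu>) - 1 / F u))"
    using pF pG mu by (intro continuous_intros cF cG) (auto simp: add_pos_pos dest: bspec)
  thus ?thesis unfolding Istar_def[abs_def] .
qed

lemma opt_char:
  assumes mu: "\<mu> > 0" and aF: "admissible_transmission F" and aG: "admissible_recovery Fg"
    and R: "\<forall>u\<in>{0..1}. R0c \<mu> F Fg u > 1"
  shows "opt_long \<mu> F Fg \<subseteq> {0,1}"
    "opt_long \<mu> F Fg = {u\<in>{0,1}. Istar \<mu> F Fg u \<le> Istar \<mu> F Fg 0 \<and> Istar \<mu> F Fg u \<le> Istar \<mu> F Fg 1}"
proof -
  show sub: "opt_long \<mu> F Fg \<subseteq> {0,1}"
  proof
    fix u assume "u \<in> opt_long \<mu> F Fg"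
    hence "u \<in> {0..1}" "\<forall>v\<in>{0..1}. Istar \<mu> F Fg u \<le> Istar \<mu> F Fg v" unfolding opt_long_def by auto
    moreover have "u \<notin> {0<..<1}" using no_interior[OF mu aF aG R] calculation(2) by (meson not_less)
    ultimately show "u \<in> {0,1}" by auto
  qed
  obtain m where m: "m \<in> {0..1}" "\<forall>v\<in>{0..1}. Istar \<mu> F Fg m \<le> Istar \<mu> F Fg v"
    using continuous_attains_inf[OF compact_Icc _ Istar_cont[OF mu aF aG]] by auto
  hence "m \<in> opt_long \<mu> F Fg" unfolding opt_long_def by auto
  hence m01: "m \<in> {0,1}" using sub by auto
  show "opt_long \<mu> F Fg = {u\<in>{0,1}. Istar \<mu> F Fg u \<le> Istar \<mu> F Fg 0 \<and> Istar \<mu> F Fg u \<le> Istar \<mu> F Fg 1}"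
  proof
    show "opt_long \<mu> F Fg \<subseteq> {u\<in>{0,1}. Istar \<mu> F Fg u \<le> Istar \<mu> F Fg 0 \<and> Istar \<mu> F Fg u \<le> Istar \<mu> F Fg 1}"
      using sub unfolding opt_long_def by auto
    show "{u\<in>{0,1}. Istar \<mu> F Fg u \<le> Istar \<mu> F Fg 0 \<and> Istar \<mu> F Fg u \<le> Istar \<mu> F Fg 1} \<subseteq> opt_long \<mu> F Fg"
    proof
      fix u assume u: "u \<in> {u\<in>{0,1}. Istar \<mu> F Fg u \<le> Istar \<mu> F Fg 0 \<and> Istar \<mu> F Fg u \<le> Istar \<mu> F Fg 1}"
      hence "Istar \<mu> F Fg u \<le> Istar \<mu> F Fg m" using m01 by auto
      hence "\<forall>v\<in>{0..1}. Istar \<mu> F Fg u \<le> Istar \<mu> F Fg v" using m(2) by force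
      thus "u \<in> opt_long \<mu> F Fg" using u unfolding opt_long_def by auto
    qed
  qed
qed

theorem proposition1:
  fixes \<mu> :: real and F1 Fg1 F2 Fg2 :: "real \<Rightarrow> real"
  assumes "\<mu> > 0"
    and "admissible_transmission F1" and "admissible_recovery Fg1"
    and "admissible_transmission F2" and "admissible_recovery Fg2"
    and "\<forall>u\<in>{0..1}. R0c \<mu> F1 Fg1 u > 1"
    and "\<forall>u\<in>{0..1}. R0c \<mu> F2 Fg2 u > 1"
    and "F1 0 = F2 0" and "F1 1 = F2 1"
    and "Fg1 0 = Fg2 0" and "Fg1 1 = Fg2 1"
  shows "(\<not> (\<exists>u\<in>{0<..<1}. \<forall>v\<in>{0..1}. Istar \<mu> F1 Fg1 u \<le> Istar \<mu> F1 Fg1 v))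
         \<and> opt_long \<mu> F1 Fg1 \<subseteq> {0, 1}
         \<and> opt_long \<mu> F1 Fg1 = opt_long \<mu> F2 Fg2"
proof (intro conjI)
  show "\<not> (\<exists>u\<in>{0<..<1}. \<forall>v\<in>{0..1}. Istar \<mu> F1 Fg1 u \<le> Istar \<mu> F1 Fg1 v)"
    using no_interior[OF assms(1,2,3,6)] by (meson not_less)
  show "opt_long \<mu> F1 Fg1 \<subseteq> {0, 1}" using opt_char(1)[OF assms(1,2,3,6)] .
  have e0: "Istar \<mu> F1 Fg1 0 = Istar \<mu> F2 Fg2 0" and e1: "Istar \<mu> F1 Fg1 1 = Istar \<mu> F2 Fg2 1"
    using assms(8-11) unfolding Istar_def by auto
  show "opt_long \<mu> F1 Fg1 = opt_long \<mu> F2 Fg2"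
    unfolding opt_char(2)[OF assms(1,2,3,6)] opt_char(2)[OF assms(1,4,5,7)] using e0 e1 by auto
qed

end
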